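(* Suppose processes know neither $n$ nor any upper bound $D$ on the network causal diameter, i.e., the algorithm executed by the processes does not depend on $n$ or $D$. Then there is no deterministic algorithm that solves consensus in every run (for every number of processes $n\ge2$, every assignment of input values, and every sequence of communication graphs satisfying Assumption 1 for some positive integer $D$).
   Context: Model: a finite set $\Pi$ of $n\ge2$ processes runs a deterministic algorithm in synchronous lock-step rounds $r=1,2,\dots$. An adversary fixes an infinite sequence of simple directed graphs $\mathcal{G}^1,\mathcal{G}^2,\dots$ on vertex set $\Pi$; $(p\to q)\in\mathcal{G}^r$ iff $q$ receives $p$'s round-$r$ message in round $r$. In round $r$ each process broadcasts a message determined by its current state (received exactly by its out-neighbours in $\mathcal{G}^r$), then computes its new state from its current state and the set of (sender, message) pairs received in round $r$. Consensus: each process $p$ starts with an input value $v_p$ from an ordered set $V$ with at least two elements and may irrevocably decide; Agreement: any two decided values are equal; Validity: every decided value is some process's input; Termination: every process eventually decides. Causality: $p$ causally influences $q$ in round $t$ if $q=p$ or $(p\to q)\in\mathcal{G}^t$; a causal chain of length $k\ge1$ from $p$ in round $t$ to $q$ is a sequence $p=p_0,\dots,p_k=q$ with $p_i$ causally influencing $p_{i+1}$ in round $t+i$; $d_t(p,q)$ is the least such $k$ ($\infty$ if none). A root component of $\mathcal{G}^t$ is a strongly connected component $\mathcal{R}$ with no edge $(q\to p)$, $p\in\mathcal{R}$, $q\notin\mathcal{R}$. For an interval $I=[r,s]$, an $I$-vertex-stable root component is a set $\mathcal{R}\subseteq\Pi$ that is a root component of $\mathcal{G}^t$ for every $t\in I$.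 When each $\mathcal{G}^x$ has a unique root component $\mathcal{R}^x$, the network causal diameter of round $x$ is $D^x=\max\{d_x(p,q):p\in\mathcal{R}^x,q\in\Pi\}$, and for $I=[r,s]$, $D^I=\max\{D^x:x\in I,\ x+D^x-1\le s\}$ ($\infty$ if empty). An $I$-vertex-stable root component with $I=[r,s]$ is $D$-bounded if $D\ge D^I$ and $D^{s-D+1}\le D$. Assumption 1 (parameter $D$): every $\mathcal{G}^r$ has exactly one root component; every $I$-vertex-stable root component with $|I|\ge D$ is $D$-bounded; and there is an interval $J=[r_{ST},r_{ST}+d]$ with $d>4D$ such that there is a $D$-bounded $J$-vertex-stable root component. *)

theory Defs
  imports Main "HOL-Library.Extended_Nat"
begin

text \<open>A communication pattern is a sequence of directed graphs G r (r = 1, 2, ...),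
  each given by its edge set; (p, q) in G r means q receives p's round-r message.
  G 0 is irrelevant.\<close>

type_synonym graphs = "nat \<Rightarrow> (nat \<times> nat) set"

definition simple_graphs :: "nat set \<Rightarrow> graphs \<Rightarrow> bool" where
  "simple_graphs Pi G \<longleftrightarrow> (\<forall>r\<ge>1. G r \<subseteq> Pi \<times> Pi \<and> (\<forall>p. (p, p) \<notin> G r))"

text \<open>An algorithm (independent of n and D) is given by
  an initial-state function ini (own identifier, own input),
  a message function msg (state to broadcast message),
  a transition function trn (current state, set of received (sender, message) pairs),
  and a decision output dec (state to optional value).\<close>

fun run_state :: "(nat \<Rightarrow> 'v \<Rightarrow> 's) \<Rightarrow> ('s \<Rightarrow> 'm) \<Rightarrow> ('s \<Rightarrow> (nat \<times> 'm) set \<Rightarrow> 's)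
     \<Rightarrow> nat set \<Rightarrow> (nat \<Rightarrow> 'v) \<Rightarrow> graphs \<Rightarrow> nat \<Rightarrow> nat \<Rightarrow> 's" where
  "run_state ini msg trn Pi inp G 0 p = ini p (inp p)"
| "run_state ini msg trn Pi inp G (Suc r) p =
     trn (run_state ini msg trn Pi inp G r p)
       {(q, msg (run_state ini msg trn Pi inp G r q)) | q. q \<in> Pi \<and> (q, p) \<in> G (Suc r)}"

text \<open>Decisions are irrevocable: the decided value of p is the first value ever output.\<close>

definition decides :: "(nat \<Rightarrow> 'v \<Rightarrow> 's) \<Rightarrow> ('s \<Rightarrow> 'm) \<Rightarrow> ('s \<Rightarrow> (nat \<times> 'm) set \<Rightarrow> 's)
     \<Rightarrow> ('s \<Rightarrow> 'v option) \<Rightarrow> nat set \<Rightarrow> (nat \<Rightarrow> 'v) \<Rightarrow> graphs \<Rightarrow> nat \<Rightarrow> 'v \<Rightarrow> bool" where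
  "decides ini msg trn dec Pi inp G p v \<longleftrightarrow>
     (\<exists>r. dec (run_state ini msg trn Pi inp G r p) = Some v \<and>
          (\<forall>r'<r. dec (run_state ini msg trn Pi inp G r' p) = None))"

definition consensus_run :: "(nat \<Rightarrow> 'v \<Rightarrow> 's) \<Rightarrow> ('s \<Rightarrow> 'm) \<Rightarrow> ('s \<Rightarrow> (nat \<times> 'm) set \<Rightarrow> 's)
     \<Rightarrow> ('s \<Rightarrow> 'v option) \<Rightarrow> nat set \<Rightarrow> (nat \<Rightarrow> 'v) \<Rightarrow> graphs \<Rightarrow> bool" where
  "consensus_run ini msg trn dec Pi inp G \<longleftrightarrow>
     (\<forall>p\<in>Pi. \<forall>q\<in>Pi. \<forall>v w. decides ini msg trn dec Pi inp G p v
          \<longrightarrow> decides ini msg trn dec Pi inp G q w \<longrightarrow> v = w)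
   \<and> (\<forall>p\<in>Pi. \<forall>v. decides ini msg trn dec Pi inp G p v \<longrightarrow> v \<in> inp ` Pi)
   \<and> (\<forall>p\<in>Pi. \<exists>v. decides ini msg trn dec Pi inp G p v)"

definition causal_infl :: "graphs \<Rightarrow> nat \<Rightarrow> nat \<Rightarrow> nat \<Rightarrow> bool" where
  "causal_infl G t p q \<longleftrightarrow> q = p \<or> (p, q) \<in> G t"

fun causal_chain :: "graphs \<Rightarrow> nat \<Rightarrow> nat \<Rightarrow> nat \<Rightarrow> nat \<Rightarrow> bool" where
  "causal_chain G t 0 p q = (p = q)"
| "causal_chain G t (Suc k) p q = (\<exists>p'. causal_infl G t p p' \<and> causal_chain G (Suc t) k p' q)"

definition causal_dist :: "graphs \<Rightarrow> nat \<Rightarrow> nat \<Rightarrow> nat \<Rightarrow> enat" where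
  "causal_dist G t p q =
     (if \<exists>k\<ge>1. causal_chain G t k p q then enat (LEAST k. k \<ge> 1 \<and> causal_chain G t k p q)
      else \<infinity>)"

definition strongly_connected_comp :: "nat set \<Rightarrow> graphs \<Rightarrow> nat \<Rightarrow> nat set \<Rightarrow> bool" where
  "strongly_connected_comp Pi G t R \<longleftrightarrow>
     R \<noteq> {} \<and> R \<subseteq> Pi \<and>
     (\<forall>p\<in>R. \<forall>q\<in>R. (p, q) \<in> (G t)\<^sup>*) \<and>
     (\<forall>p\<in>R. \<forall>q\<in>Pi. (p, q) \<in> (G t)\<^sup>* \<and> (q, p) \<in> (G t)\<^sup>* \<longrightarrow> q \<in> R)"

definition root_comp :: "nat set \<Rightarrow> graphs \<Rightarrow> nat \<Rightarrow> nat set \<Rightarrow> bool" where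
  "root_comp Pi G t R \<longleftrightarrow>
     strongly_connected_comp Pi G t R \<and> (\<forall>p\<in>R. \<forall>q. q \<notin> R \<longrightarrow> (q, p) \<notin> G t)"

definition the_root :: "nat set \<Rightarrow> graphs \<Rightarrow> nat \<Rightarrow> nat set" where
  "the_root Pi G t = (THE R. root_comp Pi G t R)"

text \<open>Network causal diameter D^x of round x (meaningful when the root component is unique).\<close>

definition net_diam :: "nat set \<Rightarrow> graphs \<Rightarrow> nat \<Rightarrow> enat" where
  "net_diam Pi G x = Max {causal_dist G x p q | p q. p \<in> the_root Pi G x \<and> q \<in> Pi}"

definition int_diam :: "nat set \<Rightarrow> graphs \<Rightarrow> nat \<Rightarrow> nat \<Rightarrow> enat" where
  "int_diam Pi G r s =
     (let X = {net_diam Pi G x | x. r \<le> x \<and> x \<le> s \<and> enat x + net_diam Pi G x - 1 \<le> enat s}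
      in if X = {} then \<infinity> else Max X)"

definition vertex_stable :: "nat set \<Rightarrow> graphs \<Rightarrow> nat \<Rightarrow> nat \<Rightarrow> nat set \<Rightarrow> bool" where
  "vertex_stable Pi G r s R \<longleftrightarrow> (\<forall>t. r \<le> t \<and> t \<le> s \<longrightarrow> root_comp Pi G t R)"

definition D_bounded :: "nat set \<Rightarrow> graphs \<Rightarrow> nat \<Rightarrow> nat \<Rightarrow> nat \<Rightarrow> nat set \<Rightarrow> bool" where
  "D_bounded Pi G D r s R \<longleftrightarrow>
     vertex_stable Pi G r s R \<and> int_diam Pi G r s \<le> enat D \<and> net_diam Pi G (s + 1 - D) \<le> enat D"

definition assumption1 :: "nat set \<Rightarrow> graphs \<Rightarrow> nat \<Rightarrow> bool" where
  "assumption1 Pi G D \<longleftrightarrow>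
     (\<forall>r\<ge>1. \<exists>!R. root_comp Pi G r R)
   \<and> (\<forall>r s R. 1 \<le> r \<and> r \<le> s \<and> s + 1 - r \<ge> D \<and> vertex_stable Pi G r s R \<longrightarrow> D_bounded Pi G D r s R)
   \<and> (\<exists>rST d R. rST \<ge> 1 \<and> d > 4 * D \<and> D_bounded Pi G D rST (rST + d) R)"

definition solves_consensus :: "(nat \<Rightarrow> 'v \<Rightarrow> 's) \<Rightarrow> ('s \<Rightarrow> 'm) \<Rightarrow> ('s \<Rightarrow> (nat \<times> 'm) set \<Rightarrow> 's)
     \<Rightarrow> ('s \<Rightarrow> 'v option) \<Rightarrow> bool" where
  "solves_consensus ini msg trn dec \<longleftrightarrow>
     (\<forall>Pi inp G D. finite Pi \<and> card Pi \<ge> 2 \<and> simple_graphs Pi G \<and> D \<ge> 1 \<and> assumption1 Pi G D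
        \<longrightarrow> consensus_run ini msg trn dec Pi inp G)"

end

theory Submission
  imports Defs
begin

definition chainG :: "nat \<Rightarrow> (nat \<times> nat) set" where
  "chainG N = {(i, Suc i) | i. i < N}"

definition starG :: "nat set \<Rightarrow> nat \<Rightarrow> (nat \<times> nat) set" where
  "starG P c = {(c, i) | i. i \<in> P \<and> i \<noteq> c}"

lemma root_single:
  assumes E: "G t \<subseteq> Pi \<times> Pi" and c: "c \<in> Pi" and noin: "\<forall>x. (x, c) \<notin> G t"
    and reach: "\<forall>p\<in>Pi. (c, p) \<in> (G t)\<^sup>*"
  shows "root_comp Pi G t R \<longleftrightarrow> R = {c}"
proof -
  have bk: "p = c" if "(p, c) \<in> (G t)\<^sup>*" for p
    using that by (rule rtranclE) (use noin in auto)
  show ?thesis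
  proof
    assume R: "root_comp Pi G t R"
    then obtain p where p: "p \<in> R" and RP: "R \<subseteq> Pi"
      unfolding root_comp_def strongly_connected_comp_def by blast
    have cl: "x \<in> R" if "y \<in> R" "(x, y) \<in> G t" for x y
      using R that unfolding root_comp_def by blast
    have "(c, p) \<in> (G t)\<^sup>*" using reach p RP by blast
    hence cR: "c \<in> R"
    proof (induction rule: converse_rtrancl_induct)
      case base then show ?case using p .
    next
      case (step y z) then show ?case using cl by blast
    qed
    have "\<forall>q\<in>R. q = c"
    proof
      fix q assume "q \<in> R"
      then have "(q, c) \<in> (G t)\<^sup>*" using R cR unfolding root_comp_def strongly_connected_comp_def by blast
      then show "q = c" by (rule bk)
    qed
    then show "R = {c}" using cR by blast
  next
    assume "R = {c}"
    then show "root_comp Pi G t R"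
      unfolding root_comp_def strongly_connected_comp_def using c noin bk by auto
  qed
qed

lemma causal_le1:
  assumes "causal_infl G x c q"
  shows "causal_dist G x c q \<le> 1"
proof -
  have ch: "causal_chain G x 1 c q" using assms by simp
  then have "(LEAST k. k \<ge> 1 \<and> causal_chain G x k c q) \<le> 1"
    by (intro Least_le) simp
  then show ?thesis unfolding causal_dist_def using ch
    by (auto simp: one_enat_def)
qed

lemma net_diam_le1:
  assumes fin: "finite Pi" and root: "\<And>R. root_comp Pi G x R \<longleftrightarrow> R = {c}" and c: "c \<in> Pi"
    and infl: "\<forall>q\<in>Pi. causal_infl G x c q"
  shows "net_diam Pi G x \<le> 1"
proof -
  have tr: "the_root Pi G x = {c}" unfolding the_root_def by (rule the_equality) (use root in auto)
  have S: "{causal_dist G x p q | p q. p \<in> the_root Pi G x \<and> q \<in> Pi} = (\<lambda>q. causal_dist G x c q) ` Pi"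
    unfolding tr by auto
  show ?thesis unfolding net_diam_def S
    using fin c infl causal_le1 by (subst Max_le_iff) auto
qed

lemma Dbounded_tail:
  assumes fin: "finite Pi"
    and nd: "\<And>x. x > T \<Longrightarrow> net_diam Pi G x \<le> 1"
    and rt: "\<And>x. x > T \<Longrightarrow> root_comp Pi G x R"
    and r: "r > T" "r \<le> s" "s + 1 - r \<ge> D" "D \<ge> 1"
  shows "D_bounded Pi G D r s R"
proof -
  have vs: "vertex_stable Pi G r s R" unfolding vertex_stable_def using rt r by auto
  define X where "X = {net_diam Pi G x | x. r \<le> x \<and> x \<le> s \<and> enat x + net_diam Pi G x - 1 \<le> enat s}"
  have D1: "(1::enat) \<le> enat D" using r by (simp add: one_enat_def)
  have "net_diam Pi G r \<in> X"
  proof -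
    have n1: "net_diam Pi G r \<le> 1" using nd r by auto
    have "enat r + net_diam Pi G r - 1 \<le> enat r + 1 - 1"
    proof (cases "net_diam Pi G r")
      case (enat m) then show ?thesis using n1
        by (cases m) (auto simp: one_enat_def)
    next
      case infinity then show ?thesis using n1 by simp
    qed
    also have "\<dots> \<le> enat s" using r by (simp add: one_enat_def)
    finally show ?thesis unfolding X_def using r by auto
  qed
  hence Xne: "X \<noteq> {}" by auto
  have Xfin: "finite X"
    by (rule finite_subset[of _ "(\<lambda>x. net_diam Pi G x) ` {r..s}"]) (auto simp: X_def)
  have "\<forall>y\<in>X. y \<le> enat D"
  proof
    fix y assume "y \<in> X"
    then obtain x where "y = net_diam Pi G x" "x \<ge> r" unfolding X_def by auto
    then show "y \<le> enat D" using nd[of x] r D1 by (auto intro: order_trans)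
  qed
  hence id: "int_diam Pi G r s \<le> enat D"
    unfolding int_diam_def Let_def X_def[symmetric] using Xne Xfin by (simp add: Max_le_iff)
  have "s + 1 - D > T" using r by linarith
  hence "net_diam Pi G (s + 1 - D) \<le> enat D" using nd D1 order_trans by blast
  then show ?thesis unfolding D_bounded_def using vs id by auto
qed

lemma assumption1_gen:
  assumes fin: "finite Pi"
    and root: "\<And>t R. t \<ge> 1 \<Longrightarrow> root_comp Pi G t R \<longleftrightarrow> R = {if t \<le> T then c1 else c0}"
    and neq: "c1 \<noteq> c0"
    and nd: "\<And>x. x > T \<Longrightarrow> net_diam Pi G x \<le> 1"
  shows "assumption1 Pi G (T + 1)"
proof -
  have rt: "\<And>x. x > T \<Longrightarrow> root_comp Pi G x {c0}" using root by auto
  have A: "\<forall>r\<ge>1. \<exists>!R. root_comp Pi G r R" using root by auto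
  have B: "D_bounded Pi G (T+1) r s R"
    if h: "1 \<le> r" "r \<le> s" "s + 1 - r \<ge> T + 1" "vertex_stable Pi G r s R" for r s R
  proof (cases "r > T")
    case True
    have "R = {c0}" using h(4) h(1) h(2) True root unfolding vertex_stable_def by force
    then show ?thesis using Dbounded_tail[OF fin nd rt True h(2) h(3)] by simp
  next
    case False
    have "root_comp Pi G r R" "root_comp Pi G s R" using h unfolding vertex_stable_def by auto
    have "s > T" using h by linarith
    moreover have "r \<le> T" using False by simp
    ultimately have "R = {c1}" "R = {c0}" using root[of r R] root[of s R] h
      \<open>root_comp Pi G r R\<close> \<open>root_comp Pi G s R\<close> by auto
    then show ?thesis using neq by auto
  qed
  have C: "D_bounded Pi G (T+1) (T+1) (T+1 + (4*(T+1)+1)) {c0}"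
    by (rule Dbounded_tail[OF fin nd rt]) auto
  have C': "\<exists>rST d R. rST \<ge> 1 \<and> d > 4 * (T+1) \<and> D_bounded Pi G (T+1) rST (rST + d) R"
    by (rule exI[of _ "T+1"], rule exI[of _ "4*(T+1)+1"], rule exI[of _ "{c0}"]) (use C in simp)
  show ?thesis unfolding assumption1_def using A B C' by blast
qed


lemma recv_step:
  assumes "\<And>q. q \<in> Pi \<Longrightarrow> (q, x) \<in> G (Suc r) \<Longrightarrow>
      run_state ini msg trn Pi i1 G r q = run_state ini msg trn Pi i2 G r q"
    and "run_state ini msg trn Pi i1 G r x = run_state ini msg trn Pi i2 G r x"
  shows "run_state ini msg trn Pi i1 G (Suc r) x = run_state ini msg trn Pi i2 G (Suc r) x"
proof -
  have "{(q, msg (run_state ini msg trn Pi i1 G r q)) | q. q \<in> Pi \<and> (q, x) \<in> G (Suc r)} =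
        {(q, msg (run_state ini msg trn Pi i2 G r q)) | q. q \<in> Pi \<and> (q, x) \<in> G (Suc r)}"
    using assms(1) by force
  then show ?thesis using assms(2) by simp
qed

lemma isolated:
  assumes "\<And>t q. 1 \<le> t \<Longrightarrow> t \<le> k \<Longrightarrow> (q, p) \<notin> G t"
  shows "run_state ini msg trn Pi inp G k p = ((\<lambda>s. trn s {}) ^^ k) (ini p (inp p))"
  using assms
proof (induction k)
  case 0 then show ?case by simp
next
  case (Suc k)
  have e: "{(q, msg (run_state ini msg trn Pi inp G k q)) | q. q \<in> Pi \<and> (q, p) \<in> G (Suc k)} = {}"
    using Suc.prems[of "Suc k"] by auto
  show ?case using Suc by (simp only: run_state.simps e) simp
qed

lemma chain_reach: "p \<le> N \<Longrightarrow> (0, p) \<in> (chainG N)\<^sup>*"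
proof (induction p)
  case 0 then show ?case by simp
next
  case (Suc p)
  then have "(p, Suc p) \<in> chainG N" unfolding chainG_def by auto
  then show ?case using Suc by (meson Suc_leD rtrancl_into_rtrancl)
qed

lemma star_reach: "p \<in> P \<Longrightarrow> (c, p) \<in> (starG P c)\<^sup>*"
  by (cases "p = c") (auto simp: starG_def intro!: r_into_rtrancl)

theorem theorem3:
  fixes ini :: "nat \<Rightarrow> 'v::linorder \<Rightarrow> 's"
    and msg :: "'s \<Rightarrow> 'm"
    and trn :: "'s \<Rightarrow> (nat \<times> 'm) set \<Rightarrow> 's"
    and dec :: "'s \<Rightarrow> 'v option"
  assumes "\<exists>a b :: 'v. a \<noteq> b"
  shows "\<not> solves_consensus ini msg trn dec"
proof
  assume sc: "solves_consensus ini msg trn dec"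
  obtain a b :: 'v where ab: "a \<noteq> b" using assms by blast
  define PiA where "PiA = {0, 1::nat}"
  define GA where "GA = (\<lambda>t::nat. starG PiA 0)"
  define inpA where "inpA = (\<lambda>_::nat. a)"
  have rootA: "root_comp PiA GA t R \<longleftrightarrow> R = {if t \<le> 0 then 1 else 0}" if "t \<ge> 1" for t R
  proof -
    have "root_comp PiA GA t R \<longleftrightarrow> R = {0}"
      by (rule root_single) (auto simp: GA_def starG_def PiA_def)
    then show ?thesis using that by simp
  qed
  have ndA: "net_diam PiA GA x \<le> 1" if "x > 0" for x
    by (rule net_diam_le1[where c=0])
      (use rootA[of x] that in \<open>auto simp: PiA_def GA_def starG_def causal_infl_def\<close>)
  have asmA: "assumption1 PiA GA (0 + 1)"
    by (rule assumption1_gen[of PiA GA 0 1 0]) (use rootA ndA in \<open>auto simp: PiA_def\<close>)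
  have sgA: "simple_graphs PiA GA"
    by (auto simp: PiA_def GA_def simple_graphs_def starG_def)
  have "finite PiA" "card PiA \<ge> 2" by (auto simp: PiA_def)
  then have "consensus_run ini msg trn dec PiA inpA GA"
    using sc asmA sgA unfolding solves_consensus_def by (metis le_add2)
  then obtain v where "decides ini msg trn dec PiA inpA GA 0 v" "v \<in> inpA ` PiA"
    unfolding consensus_run_def PiA_def by auto
  then obtain T where TA: "dec (run_state ini msg trn PiA inpA GA T 0) = Some a"
      "\<forall>r'<T. dec (run_state ini msg trn PiA inpA GA r' 0) = None"
    unfolding decides_def inpA_def by auto
  define N where "N = Suc T"
  define Pi where "Pi = {0..N}"
  define G where "G = (\<lambda>t. if t \<le> T then chainG N else starG Pi N)"
  define inpG where "inpG = (\<lambda>i::nat. if i = 0 then a else b)"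
  define inpD where "inpD = (\<lambda>_::nat. b)"
  have rootG: "root_comp Pi G t R \<longleftrightarrow> R = {if t \<le> T then 0 else N}" if "t \<ge> 1" for t R
  proof (cases "t \<le> T")
    case True
    have "root_comp Pi G t R \<longleftrightarrow> R = {0}"
      by (rule root_single) (use True chain_reach in \<open>auto simp: G_def chainG_def Pi_def N_def\<close>)
    then show ?thesis using True by simp
  next
    case False
    have "root_comp Pi G t R \<longleftrightarrow> R = {N}"
      by (rule root_single) (use False star_reach[of _ Pi N] in \<open>auto simp: G_def starG_def Pi_def\<close>)
    then show ?thesis using False by simp
  qed
  have ndG: "net_diam Pi G x \<le> 1" if "x > T" for x
    by (rule net_diam_le1[where c=N])
      (use rootG[of x] that in \<open>auto simp: Pi_def G_def starG_def causal_infl_def\<close>)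
  have asmG: "assumption1 Pi G (T + 1)"
    by (rule assumption1_gen[of Pi G T 0 N]) (use rootG ndG in \<open>auto simp: Pi_def N_def\<close>)
  have sg: "simple_graphs Pi G"
    by (auto simp: simple_graphs_def G_def chainG_def starG_def Pi_def)
  have cardPi: "card Pi \<ge> 2" unfolding Pi_def N_def by simp
  have finPi: "finite Pi" by (simp add: Pi_def)
  have cG: "consensus_run ini msg trn dec Pi inpG G"
    using sc asmG sg cardPi finPi unfolding solves_consensus_def by (metis le_add2)
  have cD: "consensus_run ini msg trn dec Pi inpD G"
    using sc asmG sg cardPi finPi unfolding solves_consensus_def by (metis le_add2)
  have eq0: "run_state ini msg trn Pi inpG G r 0 = run_state ini msg trn PiA inpA GA r 0" if "r \<le> T" for r
  proof -
    have "run_state ini msg trn Pi inpG G r 0 = ((\<lambda>s. trn s {}) ^^ r) (ini 0 (inpG 0))"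
      by (rule isolated) (use that in \<open>auto simp: G_def chainG_def\<close>)
    moreover have "run_state ini msg trn PiA inpA GA r 0 = ((\<lambda>s. trn s {}) ^^ r) (ini 0 (inpA 0))"
      by (rule isolated) (auto simp: GA_def starG_def)
    ultimately show ?thesis by (simp add: inpG_def inpA_def)
  qed
  have d0: "decides ini msg trn dec Pi inpG G 0 a"
    unfolding decides_def using TA eq0 by (intro exI[of _ T]) auto
  have chainEq: "\<forall>x\<in>Pi. r < x \<longrightarrow> run_state ini msg trn Pi inpG G r x = run_state ini msg trn Pi inpD G r x"
    if "r \<le> T" for r
    using that
  proof (induction r)
    case 0 then show ?case by (auto simp: inpG_def inpD_def)
  next
    case (Suc r)
    show ?case
    proof (intro ballI impI)
      fix x assume x: "x \<in> Pi" "Suc r < x"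
      show "run_state ini msg trn Pi inpG G (Suc r) x = run_state ini msg trn Pi inpD G (Suc r) x"
      proof (rule recv_step)
        fix q assume "q \<in> Pi" "(q, x) \<in> G (Suc r)"
        then have "Suc q = x" using Suc.prems by (auto simp: G_def chainG_def)
        then show "run_state ini msg trn Pi inpG G r q = run_state ini msg trn Pi inpD G r q"
          using Suc \<open>q \<in> Pi\<close> x by auto
      qed (use Suc x in auto)
    qed
  qed
  have NPi: "N \<in> Pi" by (simp add: Pi_def)
  have tailEq: "run_state ini msg trn Pi inpG G r N = run_state ini msg trn Pi inpD G r N"
    if "r \<ge> T" for r
    using that
  proof (induction r rule: dec_induct)
    case base then show ?case using chainEq[of T] NPi by (simp add: N_def)
  next
    case (step r)
    show ?case
    proof (rule recv_step)
      fix q assume "q \<in> Pi" "(q, N) \<in> G (Suc r)"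
      then have False using step by (auto simp: G_def starG_def)
      then show "run_state ini msg trn Pi inpG G r q = run_state ini msg trn Pi inpD G r q" ..
    qed (use step in auto)
  qed
  have eqN: "run_state ini msg trn Pi inpG G r N = run_state ini msg trn Pi inpD G r N" for r
  proof (cases "r \<le> T")
    case True then show ?thesis using chainEq[of r] NPi by (simp add: N_def)
  next
    case False then show ?thesis using tailEq by simp
  qed
  obtain w where dw: "decides ini msg trn dec Pi inpD G N w" "w \<in> inpD ` Pi"
    using cD NPi unfolding consensus_run_def by blast
  then have "w = b" by (auto simp: inpD_def)
  then have "decides ini msg trn dec Pi inpG G N b"
    using dw(1) eqN unfolding decides_def by simp
  moreover have "0 \<in> Pi" by (simp add: Pi_def)
  ultimately have "a = b" using conjunct1[OF cG[unfolded consensus_run_def]] d0 NPi by metis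
  then show False using ab by simp
qed

end
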